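(* Let $(F_n)$ be the Fibonacci sequence with $F_0=0$, $F_1=1$, $F_n=F_{n-1}+F_{n-2}$, extended by $F_{-1}=1$. For every integer $m\ge 0$, $$[\underbrace{11,11,\dots,11}_{m},\,3]=\frac{F_{5m+4}}{F_{5m-1}},$$ where the continued fraction has $m+1$ entries $a_0,\dots,a_m$ with $a_i=11$ for $0\le i<m$ and $a_m=3$.
   Context: For numbers $a_0,a_1,\dots,a_m$, the finite simple continued fraction $[a_0,a_1,\dots,a_m]$ denotes $a_0+\cfrac{1}{a_1+\cfrac{1}{\ddots+\cfrac{1}{a_m}}}$, evaluated as a rational number; $[a_0]=a_0$. *)

theory Defs
  imports Complex_Main "HOL-Number_Theory.Fib"
begin

fun cf :: "rat list \<Rightarrow> rat" where
  "cf [] = 0"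
| "cf [a] = a"
| "cf (a # b # rest) = a + 1 / cf (b # rest)"

definition F :: "int \<Rightarrow> nat" where
  "F k = (if k = -1 then 1 else fib (nat k))"

end

theory Submission
  imports Defs
begin

lemma fib_id: "fib (k+10) = 11 * fib (k+5) + fib k"
  by (simp add: numeral_eq_Suc)

lemma cf_cons: "cf (a # (xs @ [b])) = a + 1 / cf (xs @ [b])"
  by (cases xs) auto

lemma fib_pos: "n > 0 \<Longrightarrow> fib n > 0"
  by (simp add: fib_neq_0_nat)

lemma main: "cf (replicate (Suc m) 11 @ [3]) = of_nat (fib (5*m+9)) / of_nat (fib (5*m+4))"
proof (induction m)
  case 0
  then show ?case by (simp add: numeral_eq_Suc)
next
  case (Suc m)
  have p1: "fib (5*m+4) > 0" "fib (5*m+9) > 0" by (auto intro: fib_pos)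
  have "cf (replicate (Suc (Suc m)) 11 @ [3]) = 11 + 1 / cf (replicate (Suc m) 11 @ [3])"
    using cf_cons[of 11 "replicate (Suc m) 11" 3] by simp
  also have "\<dots> = 11 + of_nat (fib (5*m+4)) / of_nat (fib (5*m+9))"
    using Suc by simp
  also have "\<dots> = (11 * of_nat (fib (5*m+9)) + of_nat (fib (5*m+4))) / of_nat (fib (5*m+9))"
    using p1 by (simp add: field_simps)
  also have "11 * of_nat (fib (5*m+9)) + of_nat (fib (5*m+4)) = (of_nat (fib (5*Suc m+9)) :: rat)"
    using fib_id[of "5*m+4"] by (simp add: algebra_simps)
  finally show ?case by (simp add: algebra_simps)
qed

theorem theorem4:
  fixes m :: nat
  shows "cf (replicate m 11 @ [3]) = of_nat (F (5 * int m + 4)) / of_nat (F (5 * int m - 1))"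
proof (cases m)
  case 0
  then show ?thesis by (simp add: F_def numeral_eq_Suc)
next
  case (Suc k)
  have a: "nat (5 * int m + 4) = 5*k+9" "nat (5 * int m - 1) = 5*k+4" using Suc by auto
  have b: "5 * int m + 4 \<noteq> -1" "5 * int m - 1 \<noteq> -1" using Suc by auto
  show ?thesis using main[of k] Suc unfolding F_def using a b by simp
qed

end
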